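(* Suppose the random walk $R$ is irreducible, aperiodic, positive recurrent and has negative drift, and let $F:S\to[0,\infty)$ be $C$-linear with coefficients $f_{k,i}$. Let $$f^*=\max_{k\in K}\max_{i=0,\dots,M}\max\{f_{k,i},1\},\qquad v_i=\frac{-f^*}{\sup_{n\in S:\,i\in I(n)}\{s^+_i(n)-s^-_i(n)\}}\ (i=1,\dots,M),\qquad V(n)=\sum_{i=1}^M v_i n_i^2.$$ Then there exists a constant $b_0<\infty$ such that for all $n\in S$, $u\in N_{c(n)}$ and $t\ge0$, $$|D^t_u(n)|\le V(n)+V(n+u)+b_0.$$
   Context: Let $M\ge 1$ and $S=\{0,1,2,\dots\}^M$. For $n\in S$ let $N(n)=\{u\in\{-1,0,1\}^M: n+u\in S\}$. A partition $C=\{C_k\}_{k\in K}$ ($K$ finite) of $S$ is a family of pairwise disjoint sets covering $S$ such that $N(n)=N(n')$ whenever $n,n'$ lie in the same $C_k$; write $N_k$ for this common set and $c(n)$ for the index $k$ with $n\in C_k$. The random walk $R$ is a discrete-time Markov chain on $S$ with transition probabilities $P(n,n+u)=p_{c(n),u}\ge0$ for $u\in N_{c(n)}$, $P(n,m)=0$ if $m-n\notin N_{c(n)}$, and $\sum_{u\in N_k}p_{k,u}=1$ for every $k$. For $n\in S$, $I(n)=\{i\in\{1,\dots,M\}: n_i>0\}$, $s^+_i(n)=\sum_{u\in N_{c(n)}:u_i=1}p_{c(n),u}$ and $s^-_i(n)=\sum_{u\in N_{c(n)}:u_i=-1}p_{c(n),u}$. $R$ has negative drift if $\sup_{n\in S,\,i\in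 I(n)}\{s^+_i(n)-s^-_i(n)\}<0$. A function $F:S\to[0,\infty)$ is $C$-linear if there are real coefficients $f_{k,i}$ with $F(n)=f_{k,0}+\sum_{i=1}^M f_{k,i}n_i$ for all $n\in C_k$, $k\in K$. For $t\ge0$, $F^t(n)=\sum_{k=0}^{t-1}\sum_{m\in S}P^k(n,m)F(m)$, where $P^k$ is the $k$-step transition matrix, and the bias terms are $D^t_u(n)=F^t(n+u)-F^t(n)$ for $u\in N_{c(n)}$. *)

theory Defs
  imports "HOL-Analysis.Analysis"
begin

text \<open>States: vectors n :: nat \<Rightarrow> int, coordinates 1..M, zero outside {1..M}.\<close>

definition vadd :: "(nat \<Rightarrow> int) \<Rightarrow> (nat \<Rightarrow> int) \<Rightarrow> (nat \<Rightarrow> int)" where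
  "vadd n u = (\<lambda>i. n i + u i)"

definition Sp :: "nat \<Rightarrow> (nat \<Rightarrow> int) set" where
  "Sp M = {n. (\<forall>i\<in>{1..M}. 0 \<le> n i) \<and> (\<forall>i. i \<notin> {1..M} \<longrightarrow> n i = 0)}"

definition Uset :: "nat \<Rightarrow> (nat \<Rightarrow> int) set" where
  "Uset M = {u. (\<forall>i\<in>{1..M}. u i \<in> {-1, 0, 1}) \<and> (\<forall>i. i \<notin> {1..M} \<longrightarrow> u i = 0)}"

definition Nb :: "nat \<Rightarrow> (nat \<Rightarrow> int) \<Rightarrow> (nat \<Rightarrow> int) set" where
  "Nb M n = {u \<in> Uset M. vadd n u \<in> Sp M}"

text \<open>The partition C = {C_k}, k in the finite type 'k, is given by the index map c:
  C_k = {n in S. c n = k}. It is admissible if N is constant on each C_k.\<close>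
definition is_partition :: "nat \<Rightarrow> ((nat \<Rightarrow> int) \<Rightarrow> 'k) \<Rightarrow> bool" where
  "is_partition M c \<longleftrightarrow> (\<forall>n\<in>Sp M. \<forall>n'\<in>Sp M. c n = c n' \<longrightarrow> Nb M n = Nb M n')"

definition valid_probs :: "nat \<Rightarrow> ((nat \<Rightarrow> int) \<Rightarrow> 'k) \<Rightarrow> ('k \<Rightarrow> (nat \<Rightarrow> int) \<Rightarrow> real) \<Rightarrow> bool" where
  "valid_probs M c p \<longleftrightarrow>
     (\<forall>n\<in>Sp M. (\<forall>u\<in>Nb M n. 0 \<le> p (c n) u) \<and> (\<Sum>u\<in>Nb M n. p (c n) u) = 1)"

definition trans :: "nat \<Rightarrow> ((nat \<Rightarrow> int) \<Rightarrow> 'k) \<Rightarrow> ('k \<Rightarrow> (nat \<Rightarrow> int) \<Rightarrow> real)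
    \<Rightarrow> (nat \<Rightarrow> int) \<Rightarrow> (nat \<Rightarrow> int) \<Rightarrow> real" where
  "trans M c p n m = (if (\<lambda>i. m i - n i) \<in> Nb M n then p (c n) (\<lambda>i. m i - n i) else 0)"

fun Pk :: "nat \<Rightarrow> ((nat \<Rightarrow> int) \<Rightarrow> 'k) \<Rightarrow> ('k \<Rightarrow> (nat \<Rightarrow> int) \<Rightarrow> real)
    \<Rightarrow> nat \<Rightarrow> (nat \<Rightarrow> int) \<Rightarrow> (nat \<Rightarrow> int) \<Rightarrow> real" where
  "Pk M c p 0 n m = (if n = m then 1 else 0)"
| "Pk M c p (Suc k) n m = (\<Sum>u\<in>Nb M n. trans M c p n (vadd n u) * Pk M c p k (vadd n u) m)"

text \<open>First-passage probabilities: probability that, starting in n, the walk visits m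
  for the first time (at a time \<ge> 1) exactly at time k.\<close>
fun fhit :: "nat \<Rightarrow> ((nat \<Rightarrow> int) \<Rightarrow> 'k) \<Rightarrow> ('k \<Rightarrow> (nat \<Rightarrow> int) \<Rightarrow> real)
    \<Rightarrow> nat \<Rightarrow> (nat \<Rightarrow> int) \<Rightarrow> (nat \<Rightarrow> int) \<Rightarrow> real" where
  "fhit M c p 0 n m = 0"
| "fhit M c p (Suc 0) n m = trans M c p n m"
| "fhit M c p (Suc (Suc k)) n m =
     (\<Sum>u\<in>Nb M n. if vadd n u = m then 0
                   else trans M c p n (vadd n u) * fhit M c p (Suc k) (vadd n u) m)"

definition irreducible_rw where
  "irreducible_rw M c p \<longleftrightarrow> (\<forall>n\<in>Sp M. \<forall>m\<in>Sp M. \<exists>k. Pk M c p k n m > 0)"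

definition period_rw where
  "period_rw M c p n = Gcd {k. 0 < k \<and> Pk M c p k n n > 0}"

definition aperiodic_rw where
  "aperiodic_rw M c p \<longleftrightarrow> (\<forall>n\<in>Sp M. period_rw M c p n = 1)"

definition positive_recurrent_rw where
  "positive_recurrent_rw M c p \<longleftrightarrow>
     (\<forall>n\<in>Sp M. (\<lambda>k. fhit M c p k n n) sums 1 \<and> summable (\<lambda>k. real k * fhit M c p k n n))"

definition s_plus where
  "s_plus M c p i n = (\<Sum>u\<in>{u\<in>Nb M n. u i = 1}. p (c n) u)"

definition s_minus where
  "s_minus M c p i n = (\<Sum>u\<in>{u\<in>Nb M n. u i = -1}. p (c n) u)"

definition negative_drift where
  "negative_drift M c p \<longleftrightarrow>
     Sup {s_plus M c p i n - s_minus M c p i n | n i. n \<in> Sp M \<and> i \<in> {1..M} \<and> 0 < n i} < 0"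

definition drift_sup where
  "drift_sup M c p i = Sup {s_plus M c p i n - s_minus M c p i n | n. n \<in> Sp M \<and> 0 < n i}"

definition C_linear where
  "C_linear M c F f \<longleftrightarrow>
     (\<forall>n\<in>Sp M. F n = f (c n) 0 + (\<Sum>i=1..M. f (c n) i * real_of_int (n i)))"

definition fstar :: "nat \<Rightarrow> ('k::finite \<Rightarrow> nat \<Rightarrow> real) \<Rightarrow> real" where
  "fstar M f = Max {max (f k i) 1 | k i. i \<le> M}"

definition vcoef where
  "vcoef M c p f i = - fstar M f / drift_sup M c p i"

definition Vfun where
  "Vfun M c p f n = (\<Sum>i=1..M. vcoef M c p f i * (real_of_int (n i))\<^sup>2)"

definition Ft where
  "Ft M c p F t n = (\<Sum>k<t. infsum (\<lambda>m. Pk M c p k n m * F m) (Sp M))"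

end

theory Submission imports Defs begin

lemma finite_funs:
  assumes "finite S" "\<And>i. i \<in> S \<Longrightarrow> finite (A i)"
  shows "finite {m::nat\<Rightarrow>int. (\<forall>i\<in>S. m i \<in> A i) \<and> (\<forall>i. i \<notin> S \<longrightarrow> m i = 0)}"
proof -
  have "{m::nat\<Rightarrow>int. (\<forall>i\<in>S. m i \<in> A i) \<and> (\<forall>i. i \<notin> S \<longrightarrow> m i = 0)}
        \<subseteq> (\<lambda>g i. if i \<in> S then g i else 0) ` (PiE S A)"
  proof
    fix m assume m: "m \<in> {m::nat\<Rightarrow>int. (\<forall>i\<in>S. m i \<in> A i) \<and> (\<forall>i. i \<notin> S \<longrightarrow> m i = 0)}"
    have "restrict m S \<in> PiE S A" using m by auto
    moreover have "m = (\<lambda>i. if i \<in> S then restrict m S i else 0)" using m by auto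
    ultimately show "m \<in> (\<lambda>g i. if i \<in> S then g i else 0) ` (PiE S A)" by blast
  qed
  moreover have "finite (PiE S A)" using assms by (intro finite_PiE) auto
  ultimately show ?thesis by (meson finite_imageI finite_subset)
qed

lemma infsum_fin_support:
  assumes "finite T" "T \<subseteq> S" "\<And>m. m \<in> S \<Longrightarrow> m \<notin> T \<Longrightarrow> g m = 0"
  shows "infsum g S = sum g T"
proof -
  have "infsum g S = infsum g T"
    by (rule infsum_cong_neutral) (use assms in auto)
  then show ?thesis using assms by simp
qed

lemma vadd_minus: "(\<lambda>i. vadd n u i - n i) = u" by (auto simp: vadd_def)

lemma zero_Sp: "(\<lambda>_. 0) \<in> Sp M" by (auto simp: Sp_def)

lemma finite_choice_mono:
  assumes "finite A" "\<forall>x\<in>A. \<exists>k::nat. \<forall>L\<ge>k. P L x"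
  shows "\<exists>L. \<forall>x\<in>A. P L x"
proof -
  have "\<exists>k::nat. \<forall>x\<in>A. \<forall>L\<ge>k. P L x" using assms
  proof (induction A rule: finite_induct)
    case empty then show ?case by auto
  next
    case (insert x A)
    then obtain k1 where k1: "\<forall>y\<in>A. \<forall>L\<ge>k1. P L y" by auto
    from insert obtain k2 where k2: "\<forall>L\<ge>k2. P L x" by auto
    show ?case using k1 k2 by (intro exI[of _ "max k1 k2"]) (auto simp: max.bounded_iff)
  qed
  then show ?thesis by auto
qed

lemma finite_eps:
  fixes h :: "'a \<Rightarrow> real"
  assumes "finite A" "\<forall>x\<in>A. h x < 1"
  shows "\<exists>e>0. \<forall>x\<in>A. h x \<le> 1 - e"
  using assms
proof (induction A rule: finite_induct)
  case empty then show ?case by (intro exI[of _ 1]) auto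
next
  case (insert x A)
  then obtain e where e: "e > 0" "\<forall>y\<in>A. h y \<le> 1 - e" by auto
  show ?case using e insert.prems by (intro exI[of _ "min e (1 - h x)"]) auto
qed

locale rw =
  fixes M :: nat
    and c :: "(nat \<Rightarrow> int) \<Rightarrow> 'k::finite"
    and p :: "'k \<Rightarrow> (nat \<Rightarrow> int) \<Rightarrow> real"
    and F :: "(nat \<Rightarrow> int) \<Rightarrow> real"
    and f :: "'k \<Rightarrow> nat \<Rightarrow> real"
  assumes vp: "valid_probs M c p"
    and irr: "irreducible_rw M c p"
    and nd: "negative_drift M c p"
    and Fnn: "\<forall>n\<in>Sp M. 0 \<le> F n"
    and lin: "C_linear M c F f"
begin

definition Pop :: "((nat \<Rightarrow> int) \<Rightarrow> real) \<Rightarrow> (nat \<Rightarrow> int) \<Rightarrow> real" where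
  "Pop g n = (\<Sum>u\<in>Nb M n. p (c n) u * g (vadd n u))"

lemma psum1: "n \<in> Sp M \<Longrightarrow> (\<Sum>u\<in>Nb M n. p (c n) u) = 1"
  using vp by (auto simp: valid_probs_def)

lemma pnn: "n \<in> Sp M \<Longrightarrow> u \<in> Nb M n \<Longrightarrow> 0 \<le> p (c n) u"
  using vp by (auto simp: valid_probs_def)

lemma Nb_fin: "n \<in> Sp M \<Longrightarrow> finite (Nb M n)"
  using psum1 sum.infinite by fastforce

lemma vadd_Sp: "u \<in> Nb M n \<Longrightarrow> vadd n u \<in> Sp M"
  by (auto simp: Nb_def)

lemma trans_eq: "u \<in> Nb M n \<Longrightarrow> trans M c p n (vadd n u) = p (c n) u"
  by (simp add: trans_def vadd_minus)

lemma Pop_mono: "n \<in> Sp M \<Longrightarrow> (\<And>m. m \<in> Sp M \<Longrightarrow> g m \<le> h m) \<Longrightarrow> Pop g n \<le> Pop h n"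
  unfolding Pop_def by (intro sum_mono mult_left_mono) (auto simp: pnn vadd_Sp)

lemma Pop_nn: "n \<in> Sp M \<Longrightarrow> (\<And>m. m \<in> Sp M \<Longrightarrow> 0 \<le> g m) \<Longrightarrow> 0 \<le> Pop g n"
  unfolding Pop_def by (intro sum_nonneg mult_nonneg_nonneg) (auto simp: pnn vadd_Sp)

lemma Pop_const: "n \<in> Sp M \<Longrightarrow> Pop (\<lambda>_. a) n = a"
  unfolding Pop_def by (simp add: sum_distrib_right[symmetric] psum1)

lemma Pop_add: "Pop (\<lambda>m. g m + h m) n = Pop g n + Pop h n"
  unfolding Pop_def by (simp add: distrib_left sum.distrib)

lemma Pop_diff: "Pop (\<lambda>m. g m - h m) n = Pop g n - Pop h n"
  unfolding Pop_def by (simp add: right_diff_distrib sum_subtractf)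

lemma Pop_cmult: "Pop (\<lambda>m. a * g m) n = a * Pop g n"
  unfolding Pop_def by (simp add: sum_distrib_left algebra_simps)

lemma Pop_sum: "Pop (\<lambda>m. \<Sum>L\<in>I. g L m) n = (\<Sum>L\<in>I. Pop (g L) n)"
  unfolding Pop_def by (simp add: sum_distrib_left sum.swap[of _ I])

lemma fstar_props: "1 \<le> fstar M f" "\<And>k i. i \<le> M \<Longrightarrow> f k i \<le> fstar M f"
proof -
  have eq: "{max (f k i) 1 | k i. i \<le> M} = (\<lambda>(k,i). max (f k i) 1) ` (UNIV \<times> {..M})"
    by auto
  have fin: "finite {max (f k i) 1 | k i. i \<le> M}" unfolding eq by simp
  have "max (f k i) 1 \<le> fstar M f" if "i \<le> M" for k i
    unfolding fstar_def using that by (intro Max_ge[OF fin]) auto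
  then show "1 \<le> fstar M f" "\<And>k i. i \<le> M \<Longrightarrow> f k i \<le> fstar M f"
    by (metis le_zero_eq max.bounded_iff zero_le)+
qed

lemma s_plus_le1: "n \<in> Sp M \<Longrightarrow> s_plus M c p i n \<le> 1"
  unfolding s_plus_def
  by (subst psum1[symmetric], assumption, intro sum_mono2) (auto simp: Nb_fin pnn)

lemma s_minus_nn: "n \<in> Sp M \<Longrightarrow> 0 \<le> s_minus M c p i n"
  unfolding s_minus_def by (intro sum_nonneg) (auto simp: pnn)

lemma drift_le:
  assumes "n \<in> Sp M" "0 < n i"
  shows "s_plus M c p i n - s_minus M c p i n \<le> drift_sup M c p i"
  unfolding drift_sup_def
proof (rule cSup_upper)
  show "s_plus M c p i n - s_minus M c p i n \<in> {s_plus M c p i n - s_minus M c p i n |n. n \<in> Sp M \<and> 0 < n i}"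
    using assms by auto
  show "bdd_above {s_plus M c p i n - s_minus M c p i n |n. n \<in> Sp M \<and> 0 < n i}"
    by (rule bdd_aboveI[of _ 1]) (clarsimp, smt (verit, best) s_plus_le1 s_minus_nn)
qed

lemma drift_neg:
  assumes "i \<in> {1..M}"
  shows "drift_sup M c p i < 0"
proof -
  define e :: "nat \<Rightarrow> int" where "e = (\<lambda>j. if j = i then 1 else 0)"
  have e: "e \<in> Sp M" "0 < e i" using assms by (auto simp: e_def Sp_def)
  have "drift_sup M c p i \<le> Sup {s_plus M c p i n - s_minus M c p i n | n i. n \<in> Sp M \<and> i \<in> {1..M} \<and> 0 < n i}"
    unfolding drift_sup_def
  proof (rule cSup_subset_mono)
    show "{s_plus M c p i n - s_minus M c p i n |n. n \<in> Sp M \<and> 0 < n i} \<noteq> {}" using e by auto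
    show "bdd_above {s_plus M c p i n - s_minus M c p i n | n i. n \<in> Sp M \<and> i \<in> {1..M} \<and> 0 < n i}"
      by (rule bdd_aboveI[of _ 1]) (clarsimp, smt (verit, best) s_plus_le1 s_minus_nn)
    show "{s_plus M c p i n - s_minus M c p i n |n. n \<in> Sp M \<and> 0 < n i}
      \<subseteq> {s_plus M c p i n - s_minus M c p i n | n i. n \<in> Sp M \<and> i \<in> {1..M} \<and> 0 < n i}"
      using assms by blast
  qed
  then show ?thesis using nd unfolding negative_drift_def by linarith
qed

lemma vcoef_props:
  assumes "i \<in> {1..M}"
  shows "0 < vcoef M c p f i" "vcoef M c p f i * drift_sup M c p i = - fstar M f"
  using drift_neg[OF assms] fstar_props(1)
  by (auto simp: vcoef_def divide_pos_neg)

lemma Nb_coord: "u \<in> Nb M n \<Longrightarrow> i \<in> {1..M} \<Longrightarrow> u i \<in> {-1,0,1}"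
  by (auto simp: Nb_def Uset_def)

lemma Pop_lin:
  assumes "n \<in> Sp M" "i \<in> {1..M}"
  shows "(\<Sum>u\<in>Nb M n. p (c n) u * real_of_int (u i)) = s_plus M c p i n - s_minus M c p i n"
proof -
  have "(\<Sum>u\<in>Nb M n. p (c n) u * real_of_int (u i))
     = (\<Sum>u\<in>Nb M n. (if u i = 1 then p (c n) u else 0) - (if u i = -1 then p (c n) u else 0))"
    by (rule sum.cong) (use Nb_coord[OF _ assms(2)] in auto)
  also have "\<dots> = s_plus M c p i n - s_minus M c p i n"
    unfolding s_plus_def s_minus_def sum_subtractf
    by (simp add: sum.inter_filter Nb_fin[OF assms(1)])
  finally show ?thesis .
qed

lemma Pop_sq:
  assumes "n \<in> Sp M" "i \<in> {1..M}"
  shows "Pop (\<lambda>m. (real_of_int (m i))\<^sup>2) n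
     \<le> (real_of_int (n i))\<^sup>2 + 2 * real_of_int (n i) * (s_plus M c p i n - s_minus M c p i n) + 1"
proof -
  have "Pop (\<lambda>m. (real_of_int (m i))\<^sup>2) n
     = (\<Sum>u\<in>Nb M n. p (c n) u * (real_of_int (n i))\<^sup>2 + 2 * real_of_int (n i) * (p (c n) u * real_of_int (u i))
          + p (c n) u * (real_of_int (u i))\<^sup>2)"
    unfolding Pop_def by (rule sum.cong) (auto simp: vadd_def power2_eq_square algebra_simps)
  also have "\<dots> = (real_of_int (n i))\<^sup>2 + 2 * real_of_int (n i) * (s_plus M c p i n - s_minus M c p i n)
     + (\<Sum>u\<in>Nb M n. p (c n) u * (real_of_int (u i))\<^sup>2)"
    by (simp add: sum.distrib sum_distrib_left[symmetric] sum_distrib_right[symmetric] psum1[OF assms(1)] Pop_lin[OF assms])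
  also have "(\<Sum>u\<in>Nb M n. p (c n) u * (real_of_int (u i))\<^sup>2) \<le> (\<Sum>u\<in>Nb M n. p (c n) u)"
  proof (rule sum_mono)
    fix u assume u: "u \<in> Nb M n"
    have "(real_of_int (u i))\<^sup>2 \<le> 1" using Nb_coord[OF u assms(2)] by auto
    then show "p (c n) u * (real_of_int (u i))\<^sup>2 \<le> p (c n) u"
      using pnn[OF assms(1) u] by (metis mult_left_mono mult.right_neutral)
  qed
  finally show ?thesis using psum1[OF assms(1)] by simp
qed

definition nrm :: "(nat \<Rightarrow> int) \<Rightarrow> real" where "nrm n = (\<Sum>i=1..M. real_of_int (n i))"

lemma Sp_nn: "n \<in> Sp M \<Longrightarrow> i \<in> {1..M} \<Longrightarrow> 0 \<le> n i" by (auto simp: Sp_def)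

lemma V_nn: "n \<in> Sp M \<Longrightarrow> 0 \<le> Vfun M c p f n"
  unfolding Vfun_def by (intro sum_nonneg mult_nonneg_nonneg) (use vcoef_props(1) less_imp_le in blast, simp)

lemma F_bound: "n \<in> Sp M \<Longrightarrow> F n \<le> fstar M f * (1 + nrm n)"
proof -
  assume n: "n \<in> Sp M"
  have "F n = f (c n) 0 + (\<Sum>i=1..M. f (c n) i * real_of_int (n i))" using lin n by (auto simp: C_linear_def)
  also have "\<dots> \<le> fstar M f + (\<Sum>i=1..M. fstar M f * real_of_int (n i))"
    by (intro add_mono sum_mono mult_right_mono) (use fstar_props Sp_nn[OF n] in auto)
  finally show ?thesis by (simp add: nrm_def sum_distrib_left algebra_simps)
qed

lemma V_drift:
  assumes n: "n \<in> Sp M"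
  shows "Pop (Vfun M c p f) n \<le> Vfun M c p f n + (\<Sum>i=1..M. vcoef M c p f i) - 2 * fstar M f * nrm n"
proof -
  have "Pop (Vfun M c p f) n = (\<Sum>i=1..M. vcoef M c p f i * Pop (\<lambda>m. (real_of_int (m i))\<^sup>2) n)"
    unfolding Vfun_def by (simp add: Pop_sum Pop_cmult)
  also have "\<dots> \<le> (\<Sum>i=1..M. vcoef M c p f i * (real_of_int (n i))\<^sup>2 + vcoef M c p f i - 2 * fstar M f * real_of_int (n i))"
  proof (rule sum_mono)
    fix i assume i: "i \<in> {1..M}"
    define v where "v = vcoef M c p f i"
    define d where "d = s_plus M c p i n - s_minus M c p i n"
    have v: "0 < v" "v * drift_sup M c p i = - fstar M f" using vcoef_props[OF i] by (auto simp: v_def)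
    have "v * (2 * real_of_int (n i) * d) \<le> - 2 * fstar M f * real_of_int (n i)"
    proof (cases "n i = 0")
      case True then show ?thesis by simp
    next
      case False
      then have pos: "0 < n i" using Sp_nn[OF n i] by auto
      have "d \<le> drift_sup M c p i" using drift_le[OF n pos] by (simp add: d_def)
      then have "v * d \<le> v * drift_sup M c p i" using v by (intro mult_left_mono) auto
      then have "2 * real_of_int (n i) * (v * d) \<le> 2 * real_of_int (n i) * (- fstar M f)"
        using pos v by (intro mult_left_mono) auto
      then show ?thesis by (simp add: algebra_simps)
    qed
    moreover have "v * Pop (\<lambda>m. (real_of_int (m i))\<^sup>2) n \<le> v * ((real_of_int (n i))\<^sup>2 + 2 * real_of_int (n i) * d + 1)"
      using Pop_sq[OF n i] v by (simp add: d_def mult_left_mono)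
    ultimately show "vcoef M c p f i * Pop (\<lambda>m. (real_of_int (m i))\<^sup>2) n
      \<le> vcoef M c p f i * (real_of_int (n i))\<^sup>2 + vcoef M c p f i - 2 * fstar M f * real_of_int (n i)"
      by (simp add: v_def[symmetric] algebra_simps)
  qed
  also have "\<dots> = Vfun M c p f n + (\<Sum>i=1..M. vcoef M c p f i) - 2 * fstar M f * nrm n"
    by (simp add: Vfun_def nrm_def sum.distrib sum_subtractf sum_distrib_left)
  finally show ?thesis .
qed

abbreviation zz :: "nat \<Rightarrow> int" where "zz \<equiv> (\<lambda>_. 0)"

lemma Pk_Suc: "Pk M c p (Suc k) n m = Pop (\<lambda>x. Pk M c p k x m) n"
  unfolding Pop_def by (simp add: trans_eq cong: sum.cong)

fun q :: "nat \<Rightarrow> (nat \<Rightarrow> int) \<Rightarrow> real" where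
  "q 0 n = (if n = zz then 0 else 1)"
| "q (Suc L) n = (if n = zz then 0 else Pop (q L) n)"

lemma q_nn: "n \<in> Sp M \<Longrightarrow> 0 \<le> q L n"
  by (induction L arbitrary: n) (auto intro!: Pop_nn)

lemma q_le1: "n \<in> Sp M \<Longrightarrow> q L n \<le> 1"
proof (induction L arbitrary: n)
  case (Suc L)
  have "Pop (q L) n \<le> Pop (\<lambda>_. 1) n" using Suc by (intro Pop_mono) auto
  then show ?case using Pop_const[OF Suc.prems] by simp
qed simp

lemma q_dec: "n \<in> Sp M \<Longrightarrow> q (Suc L) n \<le> q L n"
proof (induction L arbitrary: n)
  case 0
  have "Pop (q 0) n \<le> Pop (\<lambda>_. 1) n" using 0 q_le1 by (intro Pop_mono) auto
  then show ?case using Pop_const[OF 0] by simp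
next
  case (Suc L)
  have "Pop (q (Suc L)) n \<le> Pop (q L) n" using Suc by (intro Pop_mono) auto
  then show ?case by simp
qed

lemma q_mono:
  assumes "n \<in> Sp M" "L \<le> L'" shows "q L' n \<le> q L n"
  using assms(2)
proof (induction L' rule: dec_induct)
  case (step L')
  then show ?case using q_dec[OF assms(1), of L'] by linarith
qed simp

lemma q_hit: "n \<in> Sp M \<Longrightarrow> q k n + Pk M c p k n zz \<le> 1"
proof (induction k arbitrary: n)
  case 0 then show ?case by auto
next
  case (Suc k)
  have le: "Pop (\<lambda>x. Pk M c p k x zz) n \<le> Pop (\<lambda>x. 1 - q k x) n"
    using Suc by (intro Pop_mono) (auto simp: algebra_simps)
  show ?case
  proof (cases "n = zz")
    case True
    have "Pop (\<lambda>x. 1 - q k x) n \<le> Pop (\<lambda>_. 1) n"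
      using q_nn by (intro Pop_mono[OF Suc.prems]) auto
    moreover have "Pk M c p (Suc k) n zz = Pop (\<lambda>x. Pk M c p k x zz) n" by (rule Pk_Suc)
    ultimately show ?thesis using le True Pop_const[OF Suc.prems] by simp
  next
    case False
    have "Pop (\<lambda>x. 1 - q k x) n = 1 - Pop (q k) n"
      using Pop_diff[of "\<lambda>_. 1" "q k" n] Pop_const[OF Suc.prems] by simp
    moreover have "Pk M c p (Suc k) n zz = Pop (\<lambda>x. Pk M c p k x zz) n" by (rule Pk_Suc)
    ultimately show ?thesis using le False by simp
  qed
qed

fun Gt :: "real \<Rightarrow> nat \<Rightarrow> (nat \<Rightarrow> int) \<Rightarrow> real" where
  "Gt a 0 n = 0"
| "Gt a (Suc t) n = (if n = zz then 0 else F n + a + Pop (Gt a t) n)"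

lemma Gt_nn: "n \<in> Sp M \<Longrightarrow> 0 \<le> a \<Longrightarrow> 0 \<le> Gt a t n"
  by (induction t arbitrary: n) (auto intro!: add_nonneg_nonneg Pop_nn simp: Fnn)

lemma nrm_nn: "n \<in> Sp M \<Longrightarrow> 0 \<le> nrm n"
  unfolding nrm_def by (intro sum_nonneg) (auto dest: Sp_nn)


lemma Gt_bound:
  assumes a: "0 \<le> a"
  shows "\<exists>K\<ge>0. \<forall>t. \<forall>n\<in>Sp M. Gt a t n \<le> Vfun M c p f n + K"
proof -
  define fs where "fs = fstar M f"
  have fs1: "1 \<le> fs" using fstar_props by (simp add: fs_def)
  define c1 where "c1 = fs + a + (\<Sum>i=1..M. vcoef M c p f i)"
  have c1: "0 < c1"
  proof -
    have "0 \<le> (\<Sum>i=1..M. vcoef M c p f i)" by (intro sum_nonneg) (use vcoef_props(1) less_imp_le in blast)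
    then show ?thesis using fs1 a by (simp add: c1_def)
  qed
  define A where "A = {n \<in> Sp M. n \<noteq> zz \<and> fs * nrm n < c1}"
  have finA: "finite A"
  proof (rule finite_subset)
    show "finite {m::nat\<Rightarrow>int. (\<forall>i\<in>{1..M}. m i \<in> {0..ceiling c1}) \<and> (\<forall>i. i \<notin> {1..M} \<longrightarrow> m i = 0)}"
      by (rule finite_funs) auto
    show "A \<subseteq> {m::nat\<Rightarrow>int. (\<forall>i\<in>{1..M}. m i \<in> {0..ceiling c1}) \<and> (\<forall>i. i \<notin> {1..M} \<longrightarrow> m i = 0)}"
    proof
      fix n assume n: "n \<in> A"
      have nS: "n \<in> Sp M" using n by (simp add: A_def)
      have "n i \<le> ceiling c1" if i: "i \<in> {1..M}" for i
      proof -
        have "real_of_int (n i) \<le> nrm n" unfolding nrm_def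
          by (rule member_le_sum) (use i Sp_nn[OF nS] in auto)
        also have "\<dots> \<le> fs * nrm n" using fs1 nrm_nn[OF nS] by (simp add: mult_le_cancel_right1)
        also have "\<dots> < c1" using n by (simp add: A_def)
        finally show ?thesis by linarith
      qed
      then show "n \<in> {m::nat\<Rightarrow>int. (\<forall>i\<in>{1..M}. m i \<in> {0..ceiling c1}) \<and> (\<forall>i. i \<notin> {1..M} \<longrightarrow> m i = 0)}"
        using nS by (auto simp: Sp_def)
    qed
  qed
  have "\<forall>n\<in>A. \<exists>k::nat. \<forall>L\<ge>k. q L n < 1"
  proof
    fix n assume n: "n \<in> A"
    then have nS: "n \<in> Sp M" by (simp add: A_def)
    obtain k where k: "Pk M c p k n zz > 0"
      using irr[unfolded irreducible_rw_def, rule_format, OF nS zero_Sp[of M]] by blast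
    have "\<forall>L\<ge>k. q L n < 1"
    proof (intro allI impI)
      fix L assume "k \<le> L"
      then have "q L n \<le> q k n" by (rule q_mono[OF nS])
      then show "q L n < 1" using q_hit[OF nS, of k] k by linarith
    qed
    then show "\<exists>k::nat. \<forall>L\<ge>k. q L n < 1" by blast
  qed
  then obtain L1 where L1: "\<forall>n\<in>A. q L1 n < 1"
    using finite_choice_mono[OF finA, of "\<lambda>L n. q L n < 1"] by blast
  obtain e where e: "e > 0" "\<forall>n\<in>A. q L1 n \<le> 1 - e" using finite_eps[OF finA L1] by blast
  define K where "K = c1 / e"
  have K: "0 \<le> K" "K * e = c1" using c1 e by (auto simp: K_def)
  define U where "U = (\<lambda>n. Vfun M c p f n + K * (\<Sum>L<L1. q L n))"
  have Unn: "0 \<le> U n" if "n \<in> Sp M" for n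
    unfolding U_def using V_nn[OF that] K q_nn[OF that]
    by (intro add_nonneg_nonneg mult_nonneg_nonneg sum_nonneg) auto
  have Ule: "U n \<le> Vfun M c p f n + K * L1" if "n \<in> Sp M" for n
  proof -
    have "(\<Sum>L<L1. q L n) \<le> (\<Sum>L<L1. 1)" by (intro sum_mono) (use q_le1[OF that] in auto)
    then show ?thesis unfolding U_def using K by (simp add: mult_left_mono)
  qed
  have Usup: "F n + a + Pop U n \<le> U n" if nS: "n \<in> Sp M" and nz: "n \<noteq> zz" for n
  proof -
    have "Pop (\<lambda>n. \<Sum>L<L1. q L n) n = (\<Sum>L<L1. q (Suc L) n)"
      using nz by (simp add: Pop_sum)
    also have "\<dots> = (\<Sum>L<L1. q L n) + q L1 n - 1"
      using sum.lessThan_Suc_shift[of "\<lambda>L. q L n" L1] sum.lessThan_Suc[of "\<lambda>L. q L n" L1] nz by simp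
    finally have PS: "Pop (\<lambda>n. \<Sum>L<L1. q L n) n = (\<Sum>L<L1. q L n) + q L1 n - 1" .
    have PU: "Pop U n = Pop (Vfun M c p f) n + K * ((\<Sum>L<L1. q L n) + q L1 n - 1)"
      unfolding U_def by (simp add: Pop_add Pop_cmult PS)
    have base: "F n + a + Pop (Vfun M c p f) n - Vfun M c p f n \<le> c1 - fs * nrm n"
    proof -
      have "fs * (1 + nrm n) = fs + fs * nrm n" by (simp add: algebra_simps)
      then show ?thesis using F_bound[OF nS] V_drift[OF nS] unfolding c1_def fs_def by linarith
    qed
    have "F n + a + Pop (Vfun M c p f) n - Vfun M c p f n + K * (q L1 n - 1) \<le> 0"
    proof (cases "n \<in> A")
      case True
      then have "q L1 n - 1 \<le> - e" using e by auto
      then have "K * (q L1 n - 1) \<le> K * (- e)" using K by (intro mult_left_mono) auto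
      moreover have "K * (- e) = - c1" using K by simp
      moreover have "0 \<le> fs * nrm n" using fs1 nrm_nn[OF nS] by simp
      ultimately show ?thesis using base by linarith
    next
      case False
      then have "c1 \<le> fs * nrm n" using nS nz by (auto simp: A_def)
      moreover have "K * (q L1 n - 1) \<le> 0" using K q_le1[OF nS, of L1] by (simp add: mult_nonneg_nonpos)
      ultimately show ?thesis using base by linarith
    qed
    then show ?thesis using PU unfolding U_def by (simp add: algebra_simps)
  qed
  have "Gt a t n \<le> U n" if "n \<in> Sp M" for t n
    using that
  proof (induction t arbitrary: n)
    case 0 then show ?case using Unn by simp
  next
    case (Suc t)
    show ?case
    proof (cases "n = zz")
      case True then show ?thesis using Unn[OF Suc.prems] by simp
    next
      case False
      have "Pop (Gt a t) n \<le> Pop U n" using Suc by (intro Pop_mono) auto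
      then show ?thesis using Usup[OF Suc.prems False] False by simp
    qed
  qed
  note GU = this
  show ?thesis
  proof (intro exI[of _ "K * L1"] conjI allI ballI)
    show "0 \<le> K * L1" using K by simp
    fix t n assume "n \<in> Sp M"
    then show "Gt a t n \<le> Vfun M c p f n + K * L1" using GU[of n t] Ule[of n] by linarith
  qed
qed

lemma Pop_Gt0: "Pop (Gt a 0) n = 0" by (simp add: Pop_def)

fun ak :: "nat \<Rightarrow> (nat \<Rightarrow> int) \<Rightarrow> real" where
  "ak 0 n = F n"
| "ak (Suc k) n = Pop (ak k) n"

definition Phi :: "nat \<Rightarrow> (nat \<Rightarrow> int) \<Rightarrow> real" where
  "Phi t n = (\<Sum>k<t. ak k n)"

lemma ak_nn: "n \<in> Sp M \<Longrightarrow> 0 \<le> ak k n"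
  by (induction k arbitrary: n) (auto simp: Fnn intro!: Pop_nn)

lemma Phi_Suc: "Phi (Suc t) n = F n + Pop (Phi t) n"
  unfolding Phi_def by (simp add: sum.lessThan_Suc_shift Pop_sum del: sum.lessThan_Suc)

lemma Phi_Suc2: "Phi (Suc t) n = Phi t n + ak t n"
  unfolding Phi_def by simp

lemma Phi_0: "Phi 0 n = 0" unfolding Phi_def by simp

lemma Nb_abs: assumes "u \<in> Nb M n" shows "\<bar>u i\<bar> \<le> 1"
proof (cases "i \<in> {1..M}")
  case True then show ?thesis using Nb_coord[OF assms True] by auto
next
  case False then show ?thesis using assms by (auto simp: Nb_def Uset_def)
qed

lemma Pk_supp: "Pk M c p k n m \<noteq> 0 \<Longrightarrow> \<bar>m i - n i\<bar> \<le> int k"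
proof (induction k arbitrary: n)
  case 0 then show ?case by (auto split: if_splits)
next
  case (Suc k)
  have "Pop (\<lambda>x. Pk M c p k x m) n \<noteq> 0" using Suc.prems Pk_Suc by metis
  then obtain u where u: "u \<in> Nb M n" "Pk M c p k (vadd n u) m \<noteq> 0"
    unfolding Pop_def by (metis (no_types, lifting) mult_eq_0_iff sum.neutral)
  have "\<bar>m i - vadd n u i\<bar> \<le> int k" using Suc.IH[OF u(2)] .
  moreover have "\<bar>u i\<bar> \<le> 1" using Nb_abs[OF u(1)] .
  ultimately show ?case by (simp add: vadd_def)
qed

definition Box :: "nat \<Rightarrow> (nat \<Rightarrow> int) \<Rightarrow> (nat \<Rightarrow> int) set" where
  "Box k n = {m \<in> Sp M. \<forall>i. \<bar>m i - n i\<bar> \<le> int k}"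

lemma Box_fin: "finite (Box k n)"
proof (rule finite_subset)
  show "finite {m::nat\<Rightarrow>int. (\<forall>i\<in>{1..M}. m i \<in> {n i - int k..n i + int k}) \<and> (\<forall>i. i \<notin> {1..M} \<longrightarrow> m i = 0)}"
    by (rule finite_funs) auto
  show "Box k n \<subseteq> {m::nat\<Rightarrow>int. (\<forall>i\<in>{1..M}. m i \<in> {n i - int k..n i + int k}) \<and> (\<forall>i. i \<notin> {1..M} \<longrightarrow> m i = 0)}"
  proof
    fix m assume m: "m \<in> Box k n"
    have "m i \<in> {n i - int k..n i + int k}" for i
    proof -
      from m have "\<bar>m i - n i\<bar> \<le> int k" by (simp add: Box_def)
      then show ?thesis by (auto simp: abs_le_iff)
    qed
    then show "m \<in> {m::nat\<Rightarrow>int. (\<forall>i\<in>{1..M}. m i \<in> {n i - int k..n i + int k}) \<and> (\<forall>i. i \<notin> {1..M} \<longrightarrow> m i = 0)}"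
      using m unfolding Box_def Sp_def by auto
  qed
qed

lemma infsum_ak: "n \<in> Sp M \<Longrightarrow> infsum (\<lambda>m. Pk M c p k n m * F m) (Sp M) = ak k n"
proof (induction k arbitrary: n)
  case 0
  have "infsum (\<lambda>m. Pk M c p 0 n m * F m) (Sp M) = sum (\<lambda>m. Pk M c p 0 n m * F m) {n}"
    by (rule infsum_fin_support) (use 0 in auto)
  then show ?case by simp
next
  case (Suc k)
  define T where "T = Box (Suc k) n"
  have T: "finite T" "T \<subseteq> Sp M" unfolding T_def by (rule Box_fin) (auto simp: Box_def)
  have "infsum (\<lambda>m. Pk M c p (Suc k) n m * F m) (Sp M) = sum (\<lambda>m. Pk M c p (Suc k) n m * F m) T"
  proof (rule infsum_fin_support[OF T])
    fix m assume "m \<in> Sp M" "m \<notin> T"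
    then have "Pk M c p (Suc k) n m = 0" using Pk_supp[of "Suc k" n m] by (auto simp: T_def Box_def)
    then show "Pk M c p (Suc k) n m * F m = 0" by simp
  qed
  also have "\<dots> = (\<Sum>m\<in>T. \<Sum>u\<in>Nb M n. p (c n) u * (Pk M c p k (vadd n u) m * F m))"
    by (simp add: Pk_Suc Pop_def sum_distrib_right mult.assoc del: Pk.simps)
  also have "\<dots> = (\<Sum>u\<in>Nb M n. p (c n) u * (\<Sum>m\<in>T. Pk M c p k (vadd n u) m * F m))"
    by (simp add: sum.swap[of _ T] sum_distrib_left)
  also have "\<dots> = (\<Sum>u\<in>Nb M n. p (c n) u * ak k (vadd n u))"
  proof (rule sum.cong[OF refl])
    fix u assume u: "u \<in> Nb M n"
    have "infsum (\<lambda>m. Pk M c p k (vadd n u) m * F m) (Sp M) = sum (\<lambda>m. Pk M c p k (vadd n u) m * F m) T"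
    proof (rule infsum_fin_support[OF T])
      fix m assume m: "m \<in> Sp M" "m \<notin> T"
      have "Pk M c p k (vadd n u) m = 0"
      proof (rule ccontr)
        assume nz: "Pk M c p k (vadd n u) m \<noteq> 0"
        have "\<bar>m i - n i\<bar> \<le> int (Suc k)" for i
        proof -
          have "\<bar>m i - vadd n u i\<bar> \<le> int k" using Pk_supp[OF nz] .
          moreover have "\<bar>u i\<bar> \<le> 1" using Nb_abs[OF u] .
          ultimately show ?thesis by (simp add: vadd_def)
        qed
        then show False using m by (auto simp: T_def Box_def)
      qed
      then show "Pk M c p k (vadd n u) m * F m = 0" by simp
    qed
    then show "p (c n) u * (\<Sum>m\<in>T. Pk M c p k (vadd n u) m * F m) = p (c n) u * ak k (vadd n u)"
      using Suc.IH[OF vadd_Sp[OF u]] by simp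
  qed
  also have "\<dots> = ak (Suc k) n" by (simp add: Pop_def)
  finally show ?case .
qed

lemma Ft_eq: "n \<in> Sp M \<Longrightarrow> Ft M c p F t n = Phi t n"
  unfolding Ft_def Phi_def by (simp add: infsum_ak)

lemma G_mono: "n \<in> Sp M \<Longrightarrow> Gt 0 t n \<le> Gt 0 (Suc t) n"
proof (induction t arbitrary: n)
  case 0 then show ?case using Gt_nn[OF 0, of 0 1] by simp
next
  case (Suc t)
  have "Pop (Gt 0 t) n \<le> Pop (Gt 0 (Suc t)) n" using Suc.IH by (intro Pop_mono[OF Suc.prems])
  then show ?case by simp
qed

lemma ak_inv: "n \<in> Sp M \<Longrightarrow> ak t n \<le> (Gt 0 (Suc t) n - Gt 0 t n) + F zz + Pop (Gt 0 t) zz"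
proof (induction t arbitrary: n)
  case 0
  then show ?case using Fnn zero_Sp[of M] by (auto simp: Pop_Gt0 Pop_def)
next
  case (Suc t)
  have "ak (Suc t) n = Pop (ak t) n" by simp
  also have "\<dots> \<le> Pop (\<lambda>m. (Gt 0 (Suc t) m - Gt 0 t m) + F zz + Pop (Gt 0 t) zz) n"
    by (rule Pop_mono[OF Suc.prems]) (rule Suc.IH)
  also have "\<dots> = Pop (Gt 0 (Suc t)) n - Pop (Gt 0 t) n + (F zz + Pop (Gt 0 t) zz)"
    using Pop_add[of "\<lambda>m. (Gt 0 (Suc t) m - Gt 0 t m) + F zz" "\<lambda>_. Pop (Gt 0 t) zz" n]
      Pop_add[of "\<lambda>m. (Gt 0 (Suc t) m - Gt 0 t m)" "\<lambda>_. F zz" n]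
      Pop_diff[of "Gt 0 (Suc t)" "Gt 0 t" n] Pop_const[OF Suc.prems]
    by (simp del: Gt.simps)
  finally have A: "ak (Suc t) n \<le> Pop (Gt 0 (Suc t)) n - Pop (Gt 0 t) n + (F zz + Pop (Gt 0 t) zz)" .
  have mono: "Pop (Gt 0 t) zz \<le> Pop (Gt 0 (Suc t)) zz"
    using G_mono by (intro Pop_mono[OF zero_Sp])
  show ?case
  proof (cases "n = zz")
    case True
    have z: "Gt 0 (Suc (Suc t)) zz = 0" "Gt 0 (Suc t) zz = 0" by simp_all
    show ?thesis unfolding True using A[unfolded True] z by linarith
  next
    case False
    have "Gt 0 (Suc (Suc t)) n - Gt 0 (Suc t) n = Pop (Gt 0 (Suc t)) n - Pop (Gt 0 t) n"
      using False by simp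
    then show ?thesis using A mono by linarith
  qed
qed

fun Tt :: "nat \<Rightarrow> (nat \<Rightarrow> int) \<Rightarrow> real" where
  "Tt 0 n = 0"
| "Tt (Suc t) n = (if n = zz then 0 else 1 + Pop (Tt t) n)"

lemma Tt_nn: "n \<in> Sp M \<Longrightarrow> 0 \<le> Tt t n"
  by (induction t arbitrary: n) (auto intro!: add_nonneg_nonneg Pop_nn)

lemma Gt_lin: "Gt a t n = Gt 0 t n + a * Tt t n"
proof (induction t arbitrary: n)
  case 0 then show ?case by simp
next
  case (Suc t)
  have e: "Gt a t = (\<lambda>n. Gt 0 t n + a * Tt t n)" using Suc by auto
  show ?case by (simp add: e Pop_add Pop_cmult algebra_simps)
qed

lemma sandwich:
  assumes B: "\<And>t. ak t zz \<le> B"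
  shows "n \<in> Sp M \<Longrightarrow> Phi t n \<le> Gt 0 t n + Phi t zz \<and> Gt 0 t n + Phi t zz - B * Tt t n \<le> Phi t n"
proof (induction t arbitrary: n)
  case 0 then show ?case by (simp add: Phi_0)
next
  case (Suc t)
  show ?case
  proof (cases "n = zz")
    case True then show ?thesis by simp
  next
    case False
    have up: "Pop (Phi t) n \<le> Pop (\<lambda>m. Gt 0 t m + Phi t zz) n"
      using Suc.IH by (intro Pop_mono[OF Suc.prems]) auto
    have lo: "Pop (\<lambda>m. Gt 0 t m + Phi t zz - B * Tt t m) n \<le> Pop (Phi t) n"
      using Suc.IH by (intro Pop_mono[OF Suc.prems]) auto
    have e1: "Pop (\<lambda>m. Gt 0 t m + Phi t zz) n = Pop (Gt 0 t) n + Phi t zz"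
      by (simp add: Pop_add Pop_const[OF Suc.prems] del: Gt.simps)
    have e2: "Pop (\<lambda>m. Gt 0 t m + Phi t zz - B * Tt t m) n = Pop (Gt 0 t) n + Phi t zz - B * Pop (Tt t) n"
      by (simp add: Pop_add Pop_diff Pop_cmult Pop_const[OF Suc.prems] del: Gt.simps Tt.simps)
    have z1: "Phi t zz \<le> Phi (Suc t) zz" using ak_nn[OF zero_Sp[of M], of t] by (simp add: Phi_Suc2)
    have z2: "Phi (Suc t) zz \<le> Phi t zz + B" using B[of t] by (simp add: Phi_Suc2)
    have P: "Phi (Suc t) n = F n + Pop (Phi t) n" by (rule Phi_Suc)
    have G: "Gt 0 (Suc t) n = F n + Pop (Gt 0 t) n" using False by simp
    have T: "Tt (Suc t) n = 1 + Pop (Tt t) n" using False by simp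
    show ?thesis using up lo e1 e2 z1 z2 P G T by (simp add: algebra_simps) linarith?
  qed
qed

lemma Gt_zz: "Gt a t zz = 0" by (cases t) auto

lemma main:
  "\<exists>b0::real. \<forall>n\<in>Sp M. \<forall>u\<in>Nb M n. \<forall>t::nat.
           \<bar>Ft M c p F t (vadd n u) - Ft M c p F t n\<bar>
             \<le> Vfun M c p f n + Vfun M c p f (vadd n u) + b0"
proof -
  obtain K1 where K1: "K1 \<ge> 0" "\<forall>t. \<forall>n\<in>Sp M. Gt 0 t n \<le> Vfun M c p f n + K1"
    using Gt_bound[of 0] by auto
  define B where "B = F zz + Pop (\<lambda>m. Vfun M c p f m + K1) zz"
  have Bnn: "0 \<le> B" unfolding B_def
    using Fnn zero_Sp[of M] V_nn K1(1)
    by (intro add_nonneg_nonneg Pop_nn[OF zero_Sp]) auto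
  have akB: "ak t zz \<le> B" for t
  proof -
    have "Pop (Gt 0 t) zz \<le> Pop (\<lambda>m. Vfun M c p f m + K1) zz"
      using K1(2) by (intro Pop_mono[OF zero_Sp]) auto
    then show ?thesis using ak_inv[OF zero_Sp, of t] by (simp add: Gt_zz B_def del: Gt.simps)
  qed
  obtain K2 where K2: "K2 \<ge> 0" "\<forall>t. \<forall>n\<in>Sp M. Gt B t n \<le> Vfun M c p f n + K2"
    using Gt_bound[OF Bnn] by auto
  show ?thesis
  proof (intro exI[of _ "2 * K2"] ballI allI)
    fix n u t assume n: "n \<in> Sp M" and u: "u \<in> Nb M n"
    define x where "x = vadd n u"
    have x: "x \<in> Sp M" using vadd_Sp[OF u] by (simp add: x_def)
    have sx: "Phi t x \<le> Gt 0 t x + Phi t zz" "Gt 0 t x + Phi t zz - B * Tt t x \<le> Phi t x"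
      using sandwich[OF akB x] by auto
    have sn: "Phi t n \<le> Gt 0 t n + Phi t zz" "Gt 0 t n + Phi t zz - B * Tt t n \<le> Phi t n"
      using sandwich[OF akB n] by auto
    have nn: "0 \<le> Gt 0 t x" "0 \<le> Gt 0 t n" "0 \<le> B * Tt t x" "0 \<le> B * Tt t n"
      using Gt_nn[OF x] Gt_nn[OF n] Tt_nn[OF x] Tt_nn[OF n] Bnn by auto
    have lx: "Gt B t x = Gt 0 t x + B * Tt t x" "Gt B t n = Gt 0 t n + B * Tt t n"
      by (rule Gt_lin)+
    have bx: "Gt B t x \<le> Vfun M c p f x + K2" "Gt B t n \<le> Vfun M c p f n + K2"
      using K2(2) x n by auto
    have "\<bar>Phi t x - Phi t n\<bar> \<le> Vfun M c p f n + Vfun M c p f x + 2 * K2"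
      using sx sn nn lx bx unfolding abs_le_iff by linarith
    then show "\<bar>Ft M c p F t (vadd n u) - Ft M c p F t n\<bar> \<le> Vfun M c p f n + Vfun M c p f (vadd n u) + 2 * K2"
      using Ft_eq[OF x] Ft_eq[OF n] by (simp add: x_def)
  qed
qed

end

theorem theorem4p2:

  fixes M :: nat
    and c :: "(nat \<Rightarrow> int) \<Rightarrow> 'k::finite"
    and p :: "'k \<Rightarrow> (nat \<Rightarrow> int) \<Rightarrow> real"
    and F :: "(nat \<Rightarrow> int) \<Rightarrow> real"
    and f :: "'k \<Rightarrow> nat \<Rightarrow> real"
  assumes "1 \<le> M"
    and "is_partition M c"
    and "valid_probs M c p"
    and "irreducible_rw M c p"
    and "aperiodic_rw M c p"
    and "positive_recurrent_rw M c p"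
    and "negative_drift M c p"
    and "\<forall>n\<in>Sp M. 0 \<le> F n"
    and "C_linear M c F f"
  shows "\<exists>b0::real. \<forall>n\<in>Sp M. \<forall>u\<in>Nb M n. \<forall>t::nat.
           \<bar>Ft M c p F t (vadd n u) - Ft M c p F t n\<bar>
             \<le> Vfun M c p f n + Vfun M c p f (vadd n u) + b0"
proof -
  interpret R: rw M c p F f
    by unfold_locales (use assms in auto)
  show ?thesis by (rule R.main)
qed

end
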